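(* Let $1\to A\to E\xrightarrow{\pi} G\to 1$ be an extension of groups. Let $SQ$ denote either the construction $H\mapsto(\operatorname{Conj}_n(H),\mathrm{inv})$ for a fixed $n\ge 1$, or the construction $H\mapsto(\operatorname{Core}(H),\mathrm{id})$ (the same construction for all groups involved). Then there exists a dynamical cocycle $(\alpha,\beta)$ of the symmetric quandle $SQ(G)$ over the family of sets $S=\{S_x\}_{x\in G}$ with $S_x=A$ (the underlying set of $A$, i.e. of $SQ(A)$) for every $x$, such that $SQ(E)$ is isomorphic as a symmetric quandle to $SQ(G)\times_{(\alpha,\beta)}SQ(A)$.
   Context: For a group $H$ and $n\ge1$, the $n$-conjugation quandle $\operatorname{Conj}_n(H)$ is the set $H$ with $x*y=y^{-n}xy^{n}$, and $\mathrm{inv}(x)=x^{-1}$ is a good involution on it. The core quandle $\operatorname{Core}(H)$ is the set $H$ with $x*y=yx^{-1}y$, and $\mathrm{id}$ is a good involution on it. Here a quandle is a set with binary operation $*$ such that each $x\mapsto x*y$ is bijective (inverse $x\mapsto x*^{-1}y$), $(x*y)*z=(x*z)*(y*z)$ and $x*x=x$; a good involution is $\rho$ with $\rho^2=\mathrm{id}$, $\rho(x*y)=\rho(x)*y$, $x*\rho(y)=x*^{-1}y$, and $(X,\rho)$ is then a symmetric quandle; symmetric quandle homomorphisms preserve $*$ and commute with the involutions. A dynamical cocycle of a symmetric quandle $(X,\rho)$ over a family of sets $S=\{S_x\}$ consists of maps $\alpha_{x,y}:S_x\times S_y\to S_{x*y}$, $\beta_x:S_x\to S_{\rho(x)}$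 such that for all $x,y,z$, $s\in S_x,t\in S_y,w\in S_z$ (with $\alpha_{x,y}(t)(s):=\alpha_{x,y}(s,t)$): (1) $\alpha_{x,y}(t)$ is bijective $S_x\to S_{x*y}$; (2) $\alpha_{x*y,z}(\alpha_{x,y}(s,t),w)=\alpha_{x*z,y*z}(\alpha_{x,z}(s,w),\alpha_{y,z}(t,w))$; (3) $\alpha_{\rho(x),y}(\beta_x(s),t)=\beta_{x*y}(\alpha_{x,y}(s,t))$; (4) $\beta_{\rho(x)}\beta_x(s)=s$; (5) $\alpha_{x,\rho(y)}(\beta_y(t))(s)=(\alpha_{x*^{-1}y,y}(t))^{-1}(s)$; (6) $\alpha_{x,x}(s,s)=s$. The extension $X\times_{(\alpha,\beta)}S$ is the set $\{(x,s)\mid x\in X,s\in S_x\}$ with $(x,s)*(y,t)=(x*y,\alpha_{x,y}(s,t))$ and involution $(x,s)\mapsto(\rho(x),\beta_x(s))$; it is a symmetric quandle. *)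

theory Defs
  imports "HOL-Algebra.Algebra"
begin

definition quandle :: "'x set \<Rightarrow> ('x \<Rightarrow> 'x \<Rightarrow> 'x) \<Rightarrow> bool" where
  "quandle Q mul \<longleftrightarrow>
     (\<forall>y\<in>Q. bij_betw (\<lambda>x. mul x y) Q Q) \<and>
     (\<forall>x\<in>Q. \<forall>y\<in>Q. \<forall>z\<in>Q. mul (mul x y) z = mul (mul x z) (mul y z)) \<and>
     (\<forall>x\<in>Q. mul x x = x)"

definition qinv :: "'x set \<Rightarrow> ('x \<Rightarrow> 'x \<Rightarrow> 'x) \<Rightarrow> 'x \<Rightarrow> 'x \<Rightarrow> 'x" where
  "qinv Q mul x y = the_inv_into Q (\<lambda>z. mul z y) x"

definition good_involution :: "'x set \<Rightarrow> ('x \<Rightarrow> 'x \<Rightarrow> 'x) \<Rightarrow> ('x \<Rightarrow> 'x) \<Rightarrow> bool" where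
  "good_involution Q mul \<rho> \<longleftrightarrow>
     (\<forall>x\<in>Q. \<rho> x \<in> Q) \<and> (\<forall>x\<in>Q. \<rho> (\<rho> x) = x) \<and>
     (\<forall>x\<in>Q. \<forall>y\<in>Q. \<rho> (mul x y) = mul (\<rho> x) y) \<and>
     (\<forall>x\<in>Q. \<forall>y\<in>Q. mul x (\<rho> y) = qinv Q mul x y)"

definition symmetric_quandle :: "'x set \<Rightarrow> ('x \<Rightarrow> 'x \<Rightarrow> 'x) \<Rightarrow> ('x \<Rightarrow> 'x) \<Rightarrow> bool" where
  "symmetric_quandle Q mul \<rho> \<longleftrightarrow> quandle Q mul \<and> good_involution Q mul \<rho>"

definition sym_quandle_iso ::
  "'x set \<Rightarrow> ('x \<Rightarrow> 'x \<Rightarrow> 'x) \<Rightarrow> ('x \<Rightarrow> 'x) \<Rightarrow>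
   'y set \<Rightarrow> ('y \<Rightarrow> 'y \<Rightarrow> 'y) \<Rightarrow> ('y \<Rightarrow> 'y) \<Rightarrow> ('x \<Rightarrow> 'y) \<Rightarrow> bool" where
  "sym_quandle_iso Q mul \<rho> R mul' \<rho>' f \<longleftrightarrow>
     bij_betw f Q R \<and>
     (\<forall>x\<in>Q. \<forall>y\<in>Q. f (mul x y) = mul' (f x) (f y)) \<and>
     (\<forall>x\<in>Q. f (\<rho> x) = \<rho>' (f x))"

definition dyn_cocycle ::
  "'x set \<Rightarrow> ('x \<Rightarrow> 'x \<Rightarrow> 'x) \<Rightarrow> ('x \<Rightarrow> 'x) \<Rightarrow> ('x \<Rightarrow> 's set) \<Rightarrow>
   ('x \<Rightarrow> 'x \<Rightarrow> 's \<Rightarrow> 's \<Rightarrow> 's) \<Rightarrow> ('x \<Rightarrow> 's \<Rightarrow> 's) \<Rightarrow> bool" where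
  "dyn_cocycle Q mul \<rho> S \<alpha> \<beta> \<longleftrightarrow>
     (\<forall>x\<in>Q. \<forall>y\<in>Q. \<forall>s\<in>S x. \<forall>t\<in>S y. \<alpha> x y s t \<in> S (mul x y)) \<and>
     (\<forall>x\<in>Q. \<forall>s\<in>S x. \<beta> x s \<in> S (\<rho> x)) \<and>
     (\<forall>x\<in>Q. \<forall>y\<in>Q. \<forall>t\<in>S y. bij_betw (\<lambda>s. \<alpha> x y s t) (S x) (S (mul x y))) \<and>
     (\<forall>x\<in>Q. \<forall>y\<in>Q. \<forall>z\<in>Q. \<forall>s\<in>S x. \<forall>t\<in>S y. \<forall>w\<in>S z.
        \<alpha> (mul x y) z (\<alpha> x y s t) w = \<alpha> (mul x z) (mul y z) (\<alpha> x z s w) (\<alpha> y z t w)) \<and>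
     (\<forall>x\<in>Q. \<forall>y\<in>Q. \<forall>s\<in>S x. \<forall>t\<in>S y.
        \<alpha> (\<rho> x) y (\<beta> x s) t = \<beta> (mul x y) (\<alpha> x y s t)) \<and>
     (\<forall>x\<in>Q. \<forall>s\<in>S x. \<beta> (\<rho> x) (\<beta> x s) = s) \<and>
     (\<forall>x\<in>Q. \<forall>y\<in>Q. \<forall>s\<in>S x. \<forall>t\<in>S y.
        \<alpha> x (\<rho> y) s (\<beta> y t) =
        the_inv_into (S (qinv Q mul x y)) (\<lambda>s'. \<alpha> (qinv Q mul x y) y s' t) s) \<and>
     (\<forall>x\<in>Q. \<forall>s\<in>S x. \<alpha> x x s s = s)"

text \<open>Extension Q \<times>_(alpha,beta) S: carrier Sigma Q S, with operation and involution:\<close>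
definition ext_op :: "('x \<Rightarrow> 'x \<Rightarrow> 'x) \<Rightarrow> ('x \<Rightarrow> 'x \<Rightarrow> 's \<Rightarrow> 's \<Rightarrow> 's) \<Rightarrow>
    ('x \<times> 's) \<Rightarrow> ('x \<times> 's) \<Rightarrow> ('x \<times> 's)" where
  "ext_op mul \<alpha> p q = (mul (fst p) (fst q), \<alpha> (fst p) (fst q) (snd p) (snd q))"

definition ext_rho :: "('x \<Rightarrow> 'x) \<Rightarrow> ('x \<Rightarrow> 's \<Rightarrow> 's) \<Rightarrow> ('x \<times> 's) \<Rightarrow> ('x \<times> 's)" where
  "ext_rho \<rho> \<beta> p = (\<rho> (fst p), \<beta> (fst p) (snd p))"

datatype sq_kind = ConjK nat | CoreK

definition sq_kind_ok :: "sq_kind \<Rightarrow> bool" where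
  "sq_kind_ok k = (case k of ConjK n \<Rightarrow> n \<ge> 1 | CoreK \<Rightarrow> True)"

definition sq_op :: "sq_kind \<Rightarrow> ('a, 'm) monoid_scheme \<Rightarrow> 'a \<Rightarrow> 'a \<Rightarrow> 'a" where
  "sq_op k H x y = (case k of
      ConjK n \<Rightarrow> inv\<^bsub>H\<^esub> (y [^]\<^bsub>H\<^esub> n) \<otimes>\<^bsub>H\<^esub> x \<otimes>\<^bsub>H\<^esub> (y [^]\<^bsub>H\<^esub> n)
    | CoreK \<Rightarrow> y \<otimes>\<^bsub>H\<^esub> inv\<^bsub>H\<^esub> x \<otimes>\<^bsub>H\<^esub> y)"

definition sq_rho :: "sq_kind \<Rightarrow> ('a, 'm) monoid_scheme \<Rightarrow> 'a \<Rightarrow> 'a" where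
  "sq_rho k H x = (case k of ConjK n \<Rightarrow> inv\<^bsub>H\<^esub> x | CoreK \<Rightarrow> x)"

definition group_extension ::
  "('a, 'm1) monoid_scheme \<Rightarrow> ('e, 'm2) monoid_scheme \<Rightarrow> ('g, 'm3) monoid_scheme \<Rightarrow>
   ('a \<Rightarrow> 'e) \<Rightarrow> ('e \<Rightarrow> 'g) \<Rightarrow> bool" where
  "group_extension A E G \<iota> \<pi> \<longleftrightarrow>
     group A \<and> group E \<and> group G \<and>
     \<iota> \<in> hom A E \<and> inj_on \<iota> (carrier A) \<and>
     \<pi> \<in> hom E G \<and> \<pi> ` carrier E = carrier G \<and>
     \<iota> ` carrier A = kernel E G \<pi>"

end

theory Submission imports Defs begin

lemma qinv_props:
  assumes "quandle Q m" "x \<in> Q" "y \<in> Q"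
  shows "qinv Q m x y \<in> Q" "m (qinv Q m x y) y = x"
proof -
  have b: "bij_betw (\<lambda>z. m z y) Q Q" using assms unfolding quandle_def by blast
  hence i: "inj_on (\<lambda>z. m z y) Q" and im: "(\<lambda>z. m z y) ` Q = Q" by (auto simp: bij_betw_def)
  show "qinv Q m x y \<in> Q" unfolding qinv_def using the_inv_into_into[OF i] im assms by auto
  show "m (qinv Q m x y) y = x" unfolding qinv_def using f_the_inv_into_f[OF i] im assms by auto
qed

context group begin

lemma cancel1: "a \<in> carrier G \<Longrightarrow> b \<in> carrier G \<Longrightarrow> inv a \<otimes> (a \<otimes> b) = b"
  by (simp add: m_assoc[symmetric])
lemma cancel2: "a \<in> carrier G \<Longrightarrow> b \<in> carrier G \<Longrightarrow> a \<otimes> (inv a \<otimes> b) = b"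
  by (simp add: m_assoc[symmetric])

lemma conj_pow: "w \<in> carrier G \<Longrightarrow> y \<in> carrier G \<Longrightarrow>
   (inv w \<otimes> y \<otimes> w) [^] (n::nat) = inv w \<otimes> y [^] n \<otimes> w"
proof (induction n)
  case 0 then show ?case by (simp add: m_assoc)
next
  case (Suc n) then show ?case by (simp add: m_assoc cancel2)
qed

lemma pow_comm: "x \<in> carrier G \<Longrightarrow> x \<otimes> x [^] (n::nat) = x [^] n \<otimes> x"
  by (metis nat_pow_Suc nat_pow_Suc2)

lemma sq_symq: "symmetric_quandle (carrier G) (sq_op k G) (sq_rho k G)"
proof (cases k)
  case (ConjK n)
  have op: "sq_op k G x y = inv (y [^] n) \<otimes> x \<otimes> y [^] n" for x y
    by (simp add: sq_op_def ConjK)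
  have rho: "sq_rho k G x = inv x" for x by (simp add: sq_rho_def ConjK)
  have inj: "inj_on (\<lambda>x. sq_op k G x y) (carrier G)" if "y \<in> carrier G" for y
    using that by (intro inj_onI) (simp add: op)
  have clos: "sq_op k G x y \<in> carrier G" if "x \<in> carrier G" "y \<in> carrier G" for x y
    using that by (simp add: op)
  have bij: "bij_betw (\<lambda>x. sq_op k G x y) (carrier G) (carrier G)" if y: "y \<in> carrier G" for y
    unfolding bij_betw_def
  proof (intro conjI inj[OF y] equalityI subsetI)
    fix z assume z: "z \<in> carrier G"
    show "z \<in> (\<lambda>x. sq_op k G x y) ` carrier G"
    proof
      show "z = sq_op k G (y [^] n \<otimes> z \<otimes> inv (y [^] n)) y" using y z by (simp add: op m_assoc cancel1)
      show "y [^] n \<otimes> z \<otimes> inv (y [^] n) \<in> carrier G" using y z by simp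
    qed
  qed (use clos y in auto)
  have q: "quandle (carrier G) (sq_op k G)"
    unfolding quandle_def
  proof (intro conjI ballI bij)
    fix x y z assume xyz: "x \<in> carrier G" "y \<in> carrier G" "z \<in> carrier G"
    show "sq_op k G (sq_op k G x y) z = sq_op k G (sq_op k G x z) (sq_op k G y z)"
    proof -
      have cp: "(inv (z [^] n) \<otimes> y \<otimes> z [^] n) [^] n = inv (z [^] n) \<otimes> y [^] n \<otimes> z [^] n"
        using xyz conj_pow[of "z [^] n" y n] by simp
      show ?thesis using xyz
        by (simp only: op) (simp only: cp, simp add: inv_mult_group m_assoc cancel1 cancel2)
    qed
  next
    fix x assume x: "x \<in> carrier G"
    show "sq_op k G x x = x" using x by (simp add: op m_assoc pow_comm cancel1)
  qed
  have qi: "qinv (carrier G) (sq_op k G) x y = y [^] n \<otimes> x \<otimes> inv (y [^] n)"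
    if "x \<in> carrier G" "y \<in> carrier G" for x y
    unfolding qinv_def using that
    by (intro the_inv_into_f_eq inj) (simp_all add: op m_assoc cancel1)
  show ?thesis unfolding symmetric_quandle_def good_involution_def
    using q by (simp add: rho qi op inv_mult_group m_assoc nat_pow_inv)
next
  case CoreK
  have op: "sq_op k G x y = y \<otimes> inv x \<otimes> y" for x y
    by (simp add: sq_op_def CoreK)
  have rho: "sq_rho k G x = x" for x by (simp add: sq_rho_def CoreK)
  have inv2: "sq_op k G (sq_op k G x y) y = x" if "x \<in> carrier G" "y \<in> carrier G" for x y
    using that by (simp add: op inv_mult_group m_assoc cancel1 cancel2)
  have clos: "sq_op k G x y \<in> carrier G" if "x \<in> carrier G" "y \<in> carrier G" for x y
    using that by (simp add: op)
  have inj: "inj_on (\<lambda>x. sq_op k G x y) (carrier G)" if "y \<in> carrier G" for y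
    using that by (intro inj_onI) (metis inv2)
  have bij: "bij_betw (\<lambda>x. sq_op k G x y) (carrier G) (carrier G)" if y: "y \<in> carrier G" for y
    unfolding bij_betw_def
  proof (intro conjI inj[OF y] equalityI subsetI)
    fix z assume z: "z \<in> carrier G"
    show "z \<in> (\<lambda>x. sq_op k G x y) ` carrier G"
      using inv2[OF z y, symmetric] clos[OF z y] by blast
  qed (use clos y in auto)
  have q: "quandle (carrier G) (sq_op k G)"
    unfolding quandle_def
  proof (intro conjI ballI bij)
    fix x y z assume xyz: "x \<in> carrier G" "y \<in> carrier G" "z \<in> carrier G"
    show "sq_op k G (sq_op k G x y) z = sq_op k G (sq_op k G x z) (sq_op k G y z)"
      using xyz by (simp add: op inv_mult_group m_assoc cancel1 cancel2)
  next
    fix x assume x: "x \<in> carrier G"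
    show "sq_op k G x x = x" using x by (simp add: op m_assoc)
  qed
  have qi: "qinv (carrier G) (sq_op k G) x y = sq_op k G x y"
    if "x \<in> carrier G" "y \<in> carrier G" for x y
    unfolding qinv_def using that
    by (intro the_inv_into_f_eq inj inv2 clos)
  show ?thesis unfolding symmetric_quandle_def good_involution_def
    using q by (simp add: rho qi)
qed

end

lemma transport:
  assumes sqE: "symmetric_quandle QE mE rE" and sqG: "symmetric_quandle QG mG rG"
    and pQ: "\<And>a. a \<in> QE \<Longrightarrow> p a \<in> QG"
    and pm: "\<And>a b. a \<in> QE \<Longrightarrow> b \<in> QE \<Longrightarrow> p (mE a b) = mG (p a) (p b)"
    and pr: "\<And>a. a \<in> QE \<Longrightarrow> p (rE a) = rG (p a)"
    and fb: "bij_betw f QE (Sigma QG (\<lambda>_. S))"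
    and ff: "\<And>a. a \<in> QE \<Longrightarrow> fst (f a) = p a"
  shows "\<exists>\<alpha> \<beta>. dyn_cocycle QG mG rG (\<lambda>_. S) \<alpha> \<beta> \<and>
     sym_quandle_iso QE mE rE (Sigma QG (\<lambda>_. S)) (ext_op mG \<alpha>) (ext_rho rG \<beta>) f"
proof -
  have qE: "quandle QE mE" and giE: "good_involution QE mE rE"
    using sqE by (auto simp: symmetric_quandle_def)
  have qG: "quandle QG mG" and giG: "good_involution QG mG rG"
    using sqG by (auto simp: symmetric_quandle_def)
  have mEc: "mE a b \<in> QE" if "a \<in> QE" "b \<in> QE" for a b
    using qE that unfolding quandle_def bij_betw_def by blast
  have rEc: "rE a \<in> QE" if "a \<in> QE" for a using giE that unfolding good_involution_def by blast
  have mEd: "mE (mE a b) c = mE (mE a c) (mE b c)" if "a \<in> QE" "b \<in> QE" "c \<in> QE" for a b c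
    using qE that unfolding quandle_def by blast
  have mEi: "mE a a = a" if "a \<in> QE" for a using qE that unfolding quandle_def by blast
  have mEinj: "a = a'" if "a \<in> QE" "a' \<in> QE" "b \<in> QE" "mE a b = mE a' b" for a a' b
  proof -
    have "inj_on (\<lambda>x. mE x b) QE" using qE that unfolding quandle_def bij_betw_def by blast
    thus ?thesis using that by (auto dest: inj_onD)
  qed
  have mGinj: "a = a'" if "a \<in> QG" "a' \<in> QG" "b \<in> QG" "mG a b = mG a' b" for a a' b
  proof -
    have "inj_on (\<lambda>x. mG x b) QG" using qG that unfolding quandle_def bij_betw_def by blast
    thus ?thesis using that by (auto dest: inj_onD)
  qed
  have rr: "rE (rE a) = a" if "a \<in> QE" for a using giE that unfolding good_involution_def by blast
  have rm: "rE (mE a b) = mE (rE a) b" if "a \<in> QE" "b \<in> QE" for a b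
    using giE that unfolding good_involution_def by blast
  have mrE: "mE a (rE b) = qinv QE mE a b" if "a \<in> QE" "b \<in> QE" for a b
    using giE that unfolding good_involution_def by blast
  have mrG: "mG a (rG b) = qinv QG mG a b" if "a \<in> QG" "b \<in> QG" for a b
    using giG that unfolding good_involution_def by blast
  define T where "T = Sigma QG (\<lambda>_. S)"
  define g where "g = the_inv_into QE f"
  have finj: "inj_on f QE" and fim: "f ` QE = T" using fb by (auto simp: bij_betw_def T_def)
  have gT: "g q \<in> QE" "f (g q) = q" if "q \<in> T" for q
    using that the_inv_into_into[OF finj, of q QE] f_the_inv_into_f[OF finj, of q] fim
    by (auto simp: g_def)
  have gf: "g (f a) = a" if "a \<in> QE" for a using the_inv_into_f_f[OF finj that] by (simp add: g_def)
  have fT: "f a \<in> T" if "a \<in> QE" for a using fim that by blast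
  have sS: "snd (f a) \<in> S" if "a \<in> QE" for a using fT[OF that] by (auto simp: T_def)
  have fa: "f a = (p a, snd (f a))" if "a \<in> QE" for a using ff[OF that] by (metis prod.collapse)
  have red: "\<exists>a\<in>QE. p a = x \<and> snd (f a) = s" if "x \<in> QG" "s \<in> S" for x s
  proof -
    have "(x, s) \<in> T" using that by (simp add: T_def)
    thus ?thesis using gT[of "(x,s)"] ff[of "g (x,s)"] by (intro bexI[of _ "g (x,s)"]) auto
  qed
  define \<alpha> where "\<alpha> x y s t = snd (f (mE (g (x, s)) (g (y, t))))" for x y s t
  define \<beta> where "\<beta> x s = snd (f (rE (g (x, s))))" for x s
  have k1: "\<alpha> (p a) (p b) (snd (f a)) (snd (f b)) = snd (f (mE a b))" if "a \<in> QE" "b \<in> QE" for a b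
    unfolding \<alpha>_def using that by (simp add: fa[symmetric] gf)
  have k2: "\<beta> (p a) (snd (f a)) = snd (f (rE a))" if "a \<in> QE" for a
    unfolding \<beta>_def using that by (simp add: fa[symmetric] gf)
  have k3: "mG (p a) (p b) = p (mE a b)" if "a \<in> QE" "b \<in> QE" for a b using pm that by simp
  have k4: "rG (p a) = p (rE a)" if "a \<in> QE" for a using pr that by simp
  note ks = k1 k2 k3 k4 mEc rEc
  have C1: "\<forall>x\<in>QG. \<forall>y\<in>QG. \<forall>s\<in>S. \<forall>t\<in>S. \<alpha> x y s t \<in> S"
  proof (intro ballI)
    fix x y s t assume h: "x \<in> QG" "y \<in> QG" "s \<in> S" "t \<in> S"
    obtain a where "a \<in> QE" "x = p a" "s = snd (f a)" using red[OF h(1) h(3)] by blast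
    moreover obtain b where "b \<in> QE" "y = p b" "t = snd (f b)" using red[OF h(2) h(4)] by blast
    ultimately show "\<alpha> x y s t \<in> S" by (simp add: ks sS)
  qed
  have C2: "\<forall>x\<in>QG. \<forall>s\<in>S. \<beta> x s \<in> S"
  proof (intro ballI)
    fix x s assume h: "x \<in> QG" "s \<in> S"
    obtain a where "a \<in> QE" "x = p a" "s = snd (f a)" using red[OF h] by blast
    thus "\<beta> x s \<in> S" by (simp add: ks sS)
  qed
  have C3: "bij_betw (\<lambda>s. \<alpha> x y s t) S S" if x: "x \<in> QG" and yt: "y \<in> QG" "t \<in> S" for x y t
  proof -
    obtain b where b: "b \<in> QE" "y = p b" "t = snd (f b)" using red[OF yt] by blast
    have ga: "g (x, s) \<in> QE" "p (g (x, s)) = x" "snd (f (g (x, s))) = s" if "s \<in> S" for s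
    proof -
      have T: "(x, s) \<in> T" using that x by (simp add: T_def)
      show "g (x, s) \<in> QE" using gT(1)[OF T] .
      show "p (g (x, s)) = x" using gT[OF T] ff[of "g (x,s)"] by simp
      show "snd (f (g (x, s))) = s" using gT[OF T] by simp
    qed
    have inj: "inj_on (\<lambda>s. \<alpha> x y s t) S"
    proof (rule inj_onI)
      fix s s' assume s: "s \<in> S" "s' \<in> S" "\<alpha> x y s t = \<alpha> x y s' t"
      have e1: "f (mE (g (x, s)) b) = (mG x y, \<alpha> x y s t)"
        using s(1) ga[of s] b fa[OF mEc[OF ga(1)[OF s(1)] b(1)]] k1[OF ga(1)[OF s(1)] b(1)] pm[OF ga(1)[OF s(1)] b(1)]
        by simp
      have e2: "f (mE (g (x, s')) b) = (mG x y, \<alpha> x y s' t)"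
        using s(2) ga[of s'] b fa[OF mEc[OF ga(1)[OF s(2)] b(1)]] k1[OF ga(1)[OF s(2)] b(1)] pm[OF ga(1)[OF s(2)] b(1)]
        by simp
      have "f (mE (g (x, s)) b) = f (mE (g (x, s')) b)" using e1 e2 s(3) by simp
      hence "mE (g (x, s)) b = mE (g (x, s')) b" using inj_onD[OF finj] s ga b mEc by blast
      hence "g (x, s) = g (x, s')" using mEinj ga s b by blast
      hence "snd (f (g (x, s))) = snd (f (g (x, s')))" by (rule arg_cong)
      thus "s = s'" unfolding ga(3)[OF s(1)] ga(3)[OF s(2)] .
    qed
    have im: "(\<lambda>s. \<alpha> x y s t) ` S = S"
    proof (intro equalityI subsetI)
      fix u assume "u \<in> (\<lambda>s. \<alpha> x y s t) ` S"
      thus "u \<in> S" using C1 x yt by blast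
    next
      fix u assume u: "u \<in> S"
      obtain c where c: "c \<in> QE" "p c = mG x y" "snd (f c) = u"
        using red[of "mG x y" u] u x yt qG unfolding quandle_def bij_betw_def by blast
      define a where "a = qinv QE mE c b"
      have a: "a \<in> QE" "mE a b = c" using qinv_props[OF qE c(1) b(1)] by (auto simp: a_def)
      have "mG (p a) y = mG x y" using pm[OF a(1) b(1)] a(2) c(2) b(2) by simp
      hence pa: "p a = x" using mGinj pQ a x yt by blast
      have "\<alpha> x y (snd (f a)) t = u" using k1[OF a(1) b(1)] pa b a c by simp
      thus "u \<in> (\<lambda>s. \<alpha> x y s t) ` S" using sS[OF a(1)] by blast
    qed
    show ?thesis using inj im by (simp add: bij_betw_def)
  qed
  have cocycle: "dyn_cocycle QG mG rG (\<lambda>_. S) \<alpha> \<beta>"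
    unfolding dyn_cocycle_def
  proof (intro conjI C1 C2 ballI C3)
    fix x y z s t w assume h: "x \<in> QG" "y \<in> QG" "z \<in> QG" "s \<in> S" "t \<in> S" "w \<in> S"
    obtain a where "a \<in> QE" "x = p a" "s = snd (f a)" using red[OF h(1) h(4)] by blast
    moreover obtain b where "b \<in> QE" "y = p b" "t = snd (f b)" using red[OF h(2) h(5)] by blast
    moreover obtain c where "c \<in> QE" "z = p c" "w = snd (f c)" using red[OF h(3) h(6)] by blast
    ultimately show "\<alpha> (mG x y) z (\<alpha> x y s t) w = \<alpha> (mG x z) (mG y z) (\<alpha> x z s w) (\<alpha> y z t w)"
      by (simp add: ks mEd[of a b c])
  next
    fix x y s t assume h: "x \<in> QG" "y \<in> QG" "s \<in> S" "t \<in> S"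
    obtain a where "a \<in> QE" "x = p a" "s = snd (f a)" using red[OF h(1) h(3)] by blast
    moreover obtain b where "b \<in> QE" "y = p b" "t = snd (f b)" using red[OF h(2) h(4)] by blast
    ultimately show "\<alpha> (rG x) y (\<beta> x s) t = \<beta> (mG x y) (\<alpha> x y s t)" by (simp add: ks rm)
  next
    fix x s assume h: "x \<in> QG" "s \<in> S"
    obtain a where "a \<in> QE" "x = p a" "s = snd (f a)" using red[OF h] by blast
    thus "\<beta> (rG x) (\<beta> x s) = s" by (simp add: ks rr)
  next
    fix x s assume h: "x \<in> QG" "s \<in> S"
    obtain a where "a \<in> QE" "x = p a" "s = snd (f a)" using red[OF h] by blast
    thus "\<alpha> x x s s = s" by (simp add: ks mEi)
  next
    fix x y s t assume h: "x \<in> QG" "y \<in> QG" "s \<in> S" "t \<in> S"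
    obtain a where a: "a \<in> QE" "x = p a" "s = snd (f a)" using red[OF h(1) h(3)] by blast
    obtain b where b: "b \<in> QE" "y = p b" "t = snd (f b)" using red[OF h(2) h(4)] by blast
    note ab = a(1) b(1) a(2,3) b(2,3)
    define c where "c = qinv QE mE a b"
    have c: "c \<in> QE" "mE c b = a" using qinv_props[OF qE ab(1,2)] by (auto simp: c_def)
    have pc: "qinv QG mG x y = p c"
      using ab c by (simp add: c_def mrE[symmetric] mrG[symmetric] pQ pm pr rEc)
    have lhs: "\<alpha> x (rG y) s (\<beta> y t) = snd (f c)"
    proof -
      have e1: "\<beta> y t = snd (f (rE b))" using k2[OF ab(2)] ab(5,6) by simp
      have e2: "rG y = p (rE b)" using k4[OF ab(2)] ab(5) by simp
      have "\<alpha> x (rG y) s (\<beta> y t) = snd (f (mE a (rE b)))"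
        unfolding e1 e2 ab(3,4) using k1[OF ab(1) rEc[OF ab(2)]] .
      moreover have "mE a (rE b) = c" unfolding c_def using mrE[OF ab(1,2)] .
      ultimately show ?thesis by simp
    qed
    have "the_inv_into S (\<lambda>s'. \<alpha> (p c) (p b) s' (snd (f b))) (snd (f a)) = snd (f c)"
    proof (rule the_inv_into_f_eq)
      show "inj_on (\<lambda>s'. \<alpha> (p c) (p b) s' (snd (f b))) S"
        using C3[of "p c" "p b" "snd (f b)"] pQ c ab sS by (simp add: bij_betw_def)
      show "\<alpha> (p c) (p b) (snd (f c)) (snd (f b)) = snd (f a)" using k1 c ab by simp
      show "snd (f c) \<in> S" using sS c by simp
    qed
    thus "\<alpha> x (rG y) s (\<beta> y t) =
        the_inv_into ((\<lambda>_. S) (qinv QG mG x y)) (\<lambda>s'. \<alpha> (qinv QG mG x y) y s' t) s"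
      using lhs pc ab by simp
  qed
  have iso: "sym_quandle_iso QE mE rE (Sigma QG (\<lambda>_. S)) (ext_op mG \<alpha>) (ext_rho rG \<beta>) f"
    unfolding sym_quandle_iso_def
  proof (intro conjI ballI fb)
    fix a b assume h: "a \<in> QE" "b \<in> QE"
    thus "f (mE a b) = ext_op mG \<alpha> (f a) (f b)"
      using fa[OF mEc[OF h]] by (simp add: ext_op_def ff ks)
  next
    fix a assume h: "a \<in> QE"
    thus "f (rE a) = ext_rho rG \<beta> (f a)"
      using fa[OF rEc[OF h]] by (simp add: ext_rho_def ff ks)
  qed
  show ?thesis by (rule exI[of _ \<alpha>], rule exI[of _ \<beta>], intro conjI cocycle iso)
qed


theorem corollary5p2:
  fixes A :: "('a, 'm1) monoid_scheme" and E :: "('e, 'm2) monoid_scheme"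
    and G :: "('g, 'm3) monoid_scheme"
    and \<iota> :: "'a \<Rightarrow> 'e" and \<pi> :: "'e \<Rightarrow> 'g" and k :: sq_kind
  assumes "group_extension A E G \<iota> \<pi>"
    and "sq_kind_ok k"
  shows "\<exists>(\<alpha> :: 'g \<Rightarrow> 'g \<Rightarrow> 'a \<Rightarrow> 'a \<Rightarrow> 'a) (\<beta> :: 'g \<Rightarrow> 'a \<Rightarrow> 'a).
           dyn_cocycle (carrier G) (sq_op k G) (sq_rho k G) (\<lambda>_. carrier A) \<alpha> \<beta> \<and>
           (\<exists>f. sym_quandle_iso (carrier E) (sq_op k E) (sq_rho k E)
                  (Sigma (carrier G) (\<lambda>_. carrier A)) (ext_op (sq_op k G) \<alpha>)
                  (ext_rho (sq_rho k G) \<beta>) f)"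
proof -
  note ge = assms(1)[unfolded group_extension_def]
  have gA: "group A" using ge by (elim conjE)
  have gE: "group E" using ge by (elim conjE)
  have gG: "group G" using ge by (elim conjE)
  have iH: "\<iota> \<in> hom A E" using ge by (elim conjE)
  have iinj: "inj_on \<iota> (carrier A)" using ge by (elim conjE)
  have pH: "\<pi> \<in> hom E G" using ge by (elim conjE)
  have psurj: "\<pi> ` carrier E = carrier G" using ge by (elim conjE)
  have ker: "\<iota> ` carrier A = kernel E G \<pi>" using ge by (elim conjE)
  interpret E: group E by (rule gE)
  interpret G: group G by (rule gG)
  interpret A: group A by (rule gA)
  interpret pi: group_hom E G \<pi> by (intro group_hom.intro group_hom_axioms.intro gE gG pH)
  interpret io: group_hom A E \<iota> by (intro group_hom.intro group_hom_axioms.intro gE gA iH)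
  have pQ: "\<pi> a \<in> carrier G" if "a \<in> carrier E" for a using pi.hom_closed[OF that] .
  have pm: "\<pi> (sq_op k E a b) = sq_op k G (\<pi> a) (\<pi> b)" if "a \<in> carrier E" "b \<in> carrier E" for a b
    using that by (cases k) (simp_all add: sq_op_def pi.hom_nat_pow)
  have pr: "\<pi> (sq_rho k E a) = sq_rho k G (\<pi> a)" if "a \<in> carrier E" for a
    using that by (cases k) (simp_all add: sq_rho_def)
  define \<sigma> where "\<sigma> x = (SOME e. e \<in> carrier E \<and> \<pi> e = x)" for x
  have \<sigma>: "\<sigma> x \<in> carrier E" "\<pi> (\<sigma> x) = x" if "x \<in> carrier G" for x
  proof -
    have "x \<in> \<pi> ` carrier E" using psurj that by simp
    then obtain e where "e \<in> carrier E" "x = \<pi> e" by (rule imageE)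
    hence "\<exists>e. e \<in> carrier E \<and> \<pi> e = x" by auto
    hence "\<sigma> x \<in> carrier E \<and> \<pi> (\<sigma> x) = x" unfolding \<sigma>_def by (rule someI_ex)
    thus "\<sigma> x \<in> carrier E" "\<pi> (\<sigma> x) = x" by auto
  qed
  define h where "h e = the_inv_into (carrier A) \<iota> (inv\<^bsub>E\<^esub> (\<sigma> (\<pi> e)) \<otimes>\<^bsub>E\<^esub> e)" for e
  have inker: "inv\<^bsub>E\<^esub> (\<sigma> (\<pi> e)) \<otimes>\<^bsub>E\<^esub> e \<in> \<iota> ` carrier A" if "e \<in> carrier E" for e
    unfolding ker kernel_def using that \<sigma>[of "\<pi> e"] by simp
  have hA: "h e \<in> carrier A" if "e \<in> carrier E" for e
    unfolding h_def using the_inv_into_into[OF iinj inker[OF that]] by simp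
  have ih: "\<iota> (h e) = inv\<^bsub>E\<^esub> (\<sigma> (\<pi> e)) \<otimes>\<^bsub>E\<^esub> e" if "e \<in> carrier E" for e
    unfolding h_def using f_the_inv_into_f[OF iinj inker[OF that]] .
  define f where "f e = (\<pi> e, h e)" for e
  have fb: "bij_betw f (carrier E) (Sigma (carrier G) (\<lambda>_. carrier A))"
    unfolding bij_betw_def
  proof (intro conjI inj_onI equalityI subsetI)
    fix e e' assume e: "e \<in> carrier E" "e' \<in> carrier E" "f e = f e'"
    hence pe: "\<pi> e = \<pi> e'" and he: "h e = h e'" by (auto simp: f_def)
    have "inv\<^bsub>E\<^esub> (\<sigma> (\<pi> e)) \<otimes>\<^bsub>E\<^esub> e = inv\<^bsub>E\<^esub> (\<sigma> (\<pi> e)) \<otimes>\<^bsub>E\<^esub> e'"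
      using ih[OF e(1)] ih[OF e(2)] he pe by simp
    thus "e = e'" using e \<sigma>[of "\<pi> e"] by simp
  next
    fix q assume "q \<in> f ` carrier E" thus "q \<in> Sigma (carrier G) (\<lambda>_. carrier A)"
      using hA by (auto simp: f_def)
  next
    fix q assume q: "q \<in> Sigma (carrier G) (\<lambda>_. carrier A)"
    then obtain x a where xa: "q = (x, a)" "x \<in> carrier G" "a \<in> carrier A" by auto
    define e where "e = \<sigma> x \<otimes>\<^bsub>E\<^esub> \<iota> a"
    have eE: "e \<in> carrier E" using \<sigma> xa by (simp add: e_def)
    have ia: "\<iota> a \<in> kernel E G \<pi>" using ker xa by blast
    have pe: "\<pi> e = x" using \<sigma>[OF xa(2)] xa ia by (simp add: e_def kernel_def)
    have "\<iota> (h e) = \<iota> a" using ih[OF eE] pe \<sigma>[OF xa(2)] xa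
      by (simp add: e_def E.m_assoc[symmetric])
    hence "h e = a" using iinj hA[OF eE] xa by (auto dest: inj_onD)
    thus "q \<in> f ` carrier E" using pe eE xa by (auto simp: f_def)
  qed
  have ff: "fst (f a) = \<pi> a" for a by (simp add: f_def)
  obtain \<alpha> \<beta> where ab: "dyn_cocycle (carrier G) (sq_op k G) (sq_rho k G) (\<lambda>_. carrier A) \<alpha> \<beta>"
    "sym_quandle_iso (carrier E) (sq_op k E) (sq_rho k E) (Sigma (carrier G) (\<lambda>_. carrier A))
       (ext_op (sq_op k G) \<alpha>) (ext_rho (sq_rho k G) \<beta>) f"
  proof -
    have "\<exists>\<alpha> \<beta>. dyn_cocycle (carrier G) (sq_op k G) (sq_rho k G) (\<lambda>_. carrier A) \<alpha> \<beta> \<and>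
      sym_quandle_iso (carrier E) (sq_op k E) (sq_rho k E) (Sigma (carrier G) (\<lambda>_. carrier A))
       (ext_op (sq_op k G) \<alpha>) (ext_rho (sq_rho k G) \<beta>) f"
      apply (rule transport[OF E.sq_symq G.sq_symq _ _ _ fb ff])
        apply (erule pQ)
       apply (erule (1) pm)
      apply (erule pr)
      done
    then show ?thesis using that by blast
  qed
  show ?thesis
    by (rule exI[of _ \<alpha>], rule exI[of _ \<beta>], intro conjI ab(1) exI[of _ f] ab(2))
qed

end
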